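(* Let $f\in\mathbb F_q[t;\theta]$ have degree $\ge1$. Then $f$ is irreducible in $\mathbb F_q[t;\theta]$ if and only if $f^{[]}(x)$ has no divisor $u(x)\in\mathbb F_q[x^{[]}]$ (divisibility in $\mathbb F_q[x]$) with $0<\deg u<\deg f^{[]}$.
   Context: $p$ is a prime, $q=p^n$, $\theta$ is the Frobenius map $g\mapsto g^p$ on $\mathbb F_q$ and on $\mathbb F_q[x]$. $\mathbb F_q[t;\theta]$ is the skew polynomial ring with $ta=\theta(a)t$; it is contained in $S=\mathbb F_q[x][t;\theta]$ (where $tg=g^pt$). For $u\in S$ and $h\in\mathbb F_q[x]$, $u(h)$ is the unique element of $\mathbb F_q[x]$ with $u-u(h)\in S(t-h)$. For $f\in\mathbb F_q[t;\theta]$, $f^{[]}(x):=f(x)\in\mathbb F_q[x]$; explicitly, if $f=\sum a_it^i$ then $f^{[]}(x)=\sum a_ix^{[i]}$ where $[i]=\frac{p^i-1}{p-1}$ for $i\ge1$, $[0]=0$. $\mathbb F_q[x^{[]}]=\{\sum\alpha_ix^{[i]}\mid\alpha_i\in\mathbb F_q\}$. Irreducible means: not a unit and not a product of two non-units. *)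

theory Defs
  imports "HOL-Computational_Algebra.Polynomial"
begin

text \<open>Skew polynomials in F_q[t;theta] are represented by their (left) coefficient
  polynomials sum a_i t^i, stored as elements of 'a poly; only the multiplication differs.
  The base field is a finite field 'a; p = CHAR('a), theta(a) = a^p.\<close>

definition frob_pow :: "nat \<Rightarrow> 'a::{finite,field} \<Rightarrow> 'a" where
  "frob_pow i c = c ^ (CHAR('a) ^ i)"

definition skew_mult :: "'a::{finite,field} poly \<Rightarrow> 'a poly \<Rightarrow> 'a poly" where
  "skew_mult f g = (\<Sum>i\<le>degree f. smult (coeff f i) (monom 1 i * map_poly (frob_pow i) g))"

definition skew_unit :: "'a::{finite,field} poly \<Rightarrow> bool" where
  "skew_unit f \<longleftrightarrow> (\<exists>g. skew_mult f g = 1 \<and> skew_mult g f = 1)"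

definition skew_irreducible :: "'a::{finite,field} poly \<Rightarrow> bool" where
  "skew_irreducible f \<longleftrightarrow> \<not> skew_unit f \<and>
     (\<forall>a b. f = skew_mult a b \<longrightarrow> skew_unit a \<or> skew_unit b)"

definition bracket :: "'a::{finite,field} itself \<Rightarrow> nat \<Rightarrow> nat" where
  "bracket _ i = (CHAR('a) ^ i - 1) div (CHAR('a) - 1)"

definition fbr :: "'a::{finite,field} poly \<Rightarrow> 'a poly" where
  "fbr f = (\<Sum>i\<le>degree f. monom (coeff f i) (bracket TYPE('a) i))"

definition Fq_xbr :: "'a::{finite,field} poly set" where
  "Fq_xbr = {u. \<forall>k. coeff u k \<noteq> 0 \<longrightarrow> (\<exists>i. k = bracket TYPE('a) i)}"

end

theory Submission
  imports Defs
begin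

lemma prime_char: "prime CHAR('a::{finite,field})"
  by (rule prime_CHAR_semidom) (rule finite_imp_CHAR_pos, simp)

lemma char_ge2: "CHAR('a::{finite,field}) \<ge> 2"
  using prime_char[where 'a='a] prime_ge_2_nat by blast

lemma geom_nat: "(p - 1) * (\<Sum>i<n. p^i) = p^n - (1::nat)" if "p \<ge> 1"
proof (induction n)
  case (Suc n)
  have "(p - 1) * (\<Sum>i<Suc n. p^i) = (p^n - 1) + (p - 1) * p^n"
    using Suc by (simp add: algebra_simps)
  also have "\<dots> = p^Suc n - 1" using that
    by (simp add: algebra_simps diff_mult_distrib)
  finally show ?case .
qed simp

lemma bracket_sum: "bracket TYPE('a::{finite,field}) n = (\<Sum>i<n. CHAR('a)^i)"
proof -
  have "CHAR('a) - 1 > 0" using char_ge2[where 'a='a] by simp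
  moreover have "CHAR('a)^n - 1 = (CHAR('a) - 1) * (\<Sum>i<n. CHAR('a)^i)"
    using geom_nat[of "CHAR('a)" n] char_ge2[where 'a='a] by simp
  ultimately show ?thesis unfolding bracket_def by simp
qed

lemma bracket_0 [simp]: "bracket TYPE('a::{finite,field}) 0 = 0"
  by (simp add: bracket_sum)

lemma bracket_Suc: "bracket TYPE('a::{finite,field}) (Suc n) = bracket TYPE('a) n + CHAR('a)^n"
  by (simp add: bracket_sum)

lemma bracket_add: "bracket TYPE('a::{finite,field}) (i + j) = bracket TYPE('a) i + CHAR('a)^i * bracket TYPE('a) j"
  by (induction j) (simp_all add: bracket_Suc power_add algebra_simps)

lemma bracket_strict_mono: "strict_mono (bracket TYPE('a::{finite,field}))"
  using char_ge2[where 'a='a] by (simp add: strict_mono_Suc_iff bracket_Suc)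


lemma bracket_1 [simp]: "bracket TYPE('a::{finite,field}) (Suc 0) = 1"
  by (simp add: bracket_sum)


lemma br_less_iff: "bracket TYPE('a::{finite,field}) i < bracket TYPE('a) j \<longleftrightarrow> i < j"
  using bracket_strict_mono[where 'a='a] strict_mono_less by blast

lemma br_eq_iff: "bracket TYPE('a::{finite,field}) i = bracket TYPE('a) j \<longleftrightarrow> i = j"
  using bracket_strict_mono[where 'a='a] strict_mono_eq by blast

lemma br_ge: "i \<le> bracket TYPE('a::{finite,field}) i"
  using bracket_strict_mono[where 'a='a] strict_mono_imp_increasing by blast

lemma fbr_bound:
  fixes f :: "'a::{finite,field} poly"
  assumes "degree f \<le> N"
  shows "fbr f = (\<Sum>i\<le>N. monom (coeff f i) (bracket TYPE('a) i))"
  unfolding fbr_def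
  by (rule sum.mono_neutral_left) (use assms in \<open>auto simp: coeff_eq_0\<close>)

lemma coeff_fbr_br:
  fixes f :: "'a::{finite,field} poly"
  shows "coeff (fbr f) (bracket TYPE('a) j) = coeff f j"
proof -
  have "fbr f = (\<Sum>i\<le>max (degree f) j. monom (coeff f i) (bracket TYPE('a) i))"
    by (rule fbr_bound) simp
  then have "coeff (fbr f) (bracket TYPE('a) j) = (\<Sum>i\<le>max (degree f) j. if i = j then coeff f i else 0)"
    by (simp add: coeff_sum coeff_monom br_eq_iff eq_commute)
  then show ?thesis by simp
qed

lemma coeff_fbr_notbr:
  fixes f :: "'a::{finite,field} poly"
  assumes "\<forall>j. k \<noteq> bracket TYPE('a) j"
  shows "coeff (fbr f) k = 0"
proof -
  have "\<And>i. bracket TYPE('a) i \<noteq> k" using assms by metis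
  then show ?thesis by (simp add: fbr_def coeff_sum coeff_monom)
qed

lemma fbr_0 [simp]: "fbr (0::'a::{finite,field} poly) = 0"
  by (simp add: fbr_def)

lemma degree_fbr:
  fixes f :: "'a::{finite,field} poly"
  shows "degree (fbr f) = bracket TYPE('a) (degree f)"
proof (cases "f = 0")
  case True then show ?thesis by simp
next
  case False
  have "degree (fbr f) \<le> bracket TYPE('a) (degree f)"
  proof (rule degree_le, intro allI impI)
    fix k assume k: "bracket TYPE('a) (degree f) < k"
    show "coeff (fbr f) k = 0"
    proof (cases "\<exists>j. k = bracket TYPE('a) j")
      case True
      then obtain j where j: "k = bracket TYPE('a) j" by blast
      with k have "degree f < j" by (simp add: br_less_iff)
      then show ?thesis by (simp add: j coeff_fbr_br coeff_eq_0)
    next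
      case False then show ?thesis by (simp add: coeff_fbr_notbr)
    qed
  qed
  moreover have "coeff (fbr f) (bracket TYPE('a) (degree f)) \<noteq> 0"
    using False by (simp add: coeff_fbr_br)
  then have "bracket TYPE('a) (degree f) \<le> degree (fbr f)" by (rule le_degree)
  ultimately show ?thesis by simp
qed

lemma fbr_in: "fbr (f::'a::{finite,field} poly) \<in> Fq_xbr"
  unfolding Fq_xbr_def using coeff_fbr_notbr by blast

lemma fbr_eq_0_iff: "fbr (f::'a::{finite,field} poly) = 0 \<longleftrightarrow> f = 0"
  by (metis coeff_fbr_br coeff_0 fbr_0 poly_eqI)

lemma fbr_add: "fbr (f + g :: 'a::{finite,field} poly) = fbr f + fbr g"
proof -
  let ?N = "max (degree f) (degree g)"
  have "fbr (f+g) = (\<Sum>i\<le>?N. monom (coeff (f+g) i) (bracket TYPE('a) i))"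
    by (rule fbr_bound) (simp add: degree_add_le)
  also have "\<dots> = (\<Sum>i\<le>?N. monom (coeff f i) (bracket TYPE('a) i)) + (\<Sum>i\<le>?N. monom (coeff g i) (bracket TYPE('a) i))"
    by (simp only: coeff_add add_monom[symmetric] sum.distrib)
  also have "\<dots> = fbr f + fbr g"
    by (simp add: fbr_bound[symmetric])
  finally show ?thesis .
qed

lemma smult_sum_right: "smult c (sum F A) = (\<Sum>x\<in>A. smult c (F x))"
  by (induction A rule: infinite_finite_induct) (simp_all add: smult_add_right)

lemma fbr_smult: "fbr (smult c f :: 'a::{finite,field} poly) = smult c (fbr f)"
proof -
  have "fbr (smult c f) = (\<Sum>i\<le>degree f. monom (coeff (smult c f) i) (bracket TYPE('a) i))"
    by (rule fbr_bound) simp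
  also have "\<dots> = (\<Sum>i\<le>degree f. smult c (monom (coeff f i) (bracket TYPE('a) i)))"
    by (simp only: coeff_smult smult_monom)
  also have "\<dots> = smult c (fbr f)"
    unfolding fbr_def by (rule smult_sum_right[symmetric])
  finally show ?thesis .
qed

lemma fbr_sum: "fbr (sum F A :: 'a::{finite,field} poly) = (\<Sum>x\<in>A. fbr (F x))"
  by (induction A rule: infinite_finite_induct) (simp_all add: fbr_add)

lemma fbr_monom: "fbr (monom c n :: 'a::{finite,field} poly) = monom c (bracket TYPE('a) n)"
proof -
  have "fbr (monom c n) = (\<Sum>i\<le>n. monom (coeff (monom c n) i) (bracket TYPE('a) i))"
    by (rule fbr_bound) (simp add: degree_monom_le)
  also have "\<dots> = (\<Sum>i\<le>n. if i = n then monom c (bracket TYPE('a) i) else 0)"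
    by (rule sum.cong) (auto simp: coeff_monom)
  finally show ?thesis by simp
qed

lemma fbr_surj:
  fixes u :: "'a::{finite,field} poly"
  assumes "u \<in> Fq_xbr"
  shows "\<exists>g. fbr g = u"
proof -
  define g where "g = (\<Sum>i\<le>degree u. monom (coeff u (bracket TYPE('a) i)) i)"
  have cg: "coeff g i = coeff u (bracket TYPE('a) i)" for i
  proof (cases "i \<le> degree u")
    case True
    have "coeff g i = (\<Sum>j\<le>degree u. if j = i then coeff u (bracket TYPE('a) j) else 0)"
      unfolding g_def coeff_sum coeff_monom by (rule sum.cong) auto
    also have "\<dots> = coeff u (bracket TYPE('a) i)" using True by (simp only: sum.delta finite_atMost atMost_iff if_True)
    finally show ?thesis .
  next
    case False
    then have "degree u < bracket TYPE('a) i" using br_ge[where 'a='a, of i] by simp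
    then have "coeff u (bracket TYPE('a) i) = 0" by (rule coeff_eq_0)
    moreover have "coeff g i = (\<Sum>j\<le>degree u. if j = i then coeff u (bracket TYPE('a) j) else 0)"
      unfolding g_def coeff_sum coeff_monom by (rule sum.cong) auto
    moreover have "(\<Sum>j\<le>degree u. if j = i then coeff u (bracket TYPE('a) j) else 0) = 0"
      using False by (simp only: sum.delta finite_atMost atMost_iff if_False)
    ultimately show ?thesis by (simp only:)
  qed
  have "fbr g = u"
  proof (rule poly_eqI)
    fix k show "coeff (fbr g) k = coeff u k"
    proof (cases "\<exists>j. k = bracket TYPE('a) j")
      case True then show ?thesis by (auto simp: coeff_fbr_br cg)
    next
      case False then show ?thesis using assms by (auto simp: coeff_fbr_notbr Fq_xbr_def)
    qed
  qed
  then show ?thesis by blast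
qed

lemma frob_pow_0 [simp]: "frob_pow i (0::'a::{finite,field}) = 0"
  using char_ge2[where 'a='a] by (simp add: frob_pow_def)

lemma frob_pow_nz: "c \<noteq> 0 \<Longrightarrow> frob_pow i (c::'a::{finite,field}) \<noteq> 0"
  using char_ge2[where 'a='a] by (simp add: frob_pow_def)

lemma frob_pow_zero_idx [simp]: "frob_pow 0 = (\<lambda>c::'a::{finite,field}. c)"
  by (simp add: frob_pow_def fun_eq_iff)

lemma skew_mult_bound:
  fixes f g :: "'a::{finite,field} poly"
  assumes "degree f \<le> N"
  shows "skew_mult f g = (\<Sum>i\<le>N. smult (coeff f i) (monom 1 i * map_poly (frob_pow i) g))"
  unfolding skew_mult_def
  by (rule sum.mono_neutral_left) (use assms in \<open>auto simp: coeff_eq_0\<close>)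

lemma skew_mult_add_left:
  fixes a b g :: "'a::{finite,field} poly"
  shows "skew_mult (a + b) g = skew_mult a g + skew_mult b g"
proof -
  let ?N = "max (degree a) (degree b)"
  have "skew_mult (a+b) g = (\<Sum>i\<le>?N. smult (coeff (a+b) i) (monom 1 i * map_poly (frob_pow i) g))"
    by (rule skew_mult_bound) (simp add: degree_add_le)
  also have "\<dots> = (\<Sum>i\<le>?N. smult (coeff a i) (monom 1 i * map_poly (frob_pow i) g))
     + (\<Sum>i\<le>?N. smult (coeff b i) (monom 1 i * map_poly (frob_pow i) g))"
    by (simp add: sum.distrib smult_add_left)
  also have "\<dots> = skew_mult a g + skew_mult b g"
    by (simp add: skew_mult_bound[symmetric])
  finally show ?thesis .
qed

lemma skew_mult_0_left [simp]: "skew_mult 0 (g::'a::{finite,field} poly) = 0"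
  by (simp add: skew_mult_def)

lemma skew_mult_0_right [simp]: "skew_mult f (0::'a::{finite,field} poly) = 0"
  by (simp add: skew_mult_def)

lemma skew_mult_monom:
  fixes g :: "'a::{finite,field} poly"
  shows "skew_mult (monom c k) g = smult c (monom 1 k * map_poly (frob_pow k) g)"
proof -
  have "skew_mult (monom c k) g = (\<Sum>i\<le>k. smult (coeff (monom c k) i) (monom 1 i * map_poly (frob_pow i) g))"
    by (rule skew_mult_bound) (simp add: degree_monom_le)
  also have "\<dots> = (\<Sum>i\<le>k. if i = k then smult c (monom 1 k * map_poly (frob_pow k) g) else 0)"
    by (rule sum.cong) (auto simp: coeff_monom)
  finally show ?thesis by simp
qed

lemma skew_mult_const:
  fixes f g :: "'a::{finite,field} poly"
  assumes "degree f = 0"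
  shows "skew_mult f g = smult (coeff f 0) g"
  using assms by (simp add: skew_mult_def map_poly_idI)

lemma degree_skew_monom:
  fixes g :: "'a::{finite,field} poly"
  assumes "c \<noteq> 0" "g \<noteq> 0"
  shows "degree (skew_mult (monom c k) g) = k + degree g"
    and "coeff (skew_mult (monom c k) g) (k + degree g) = c * frob_pow k (lead_coeff g)"
proof -
  have d: "degree (map_poly (frob_pow k) g) = degree g"
    by (rule degree_map_poly) (simp add: frob_pow_nz)
  have nz: "map_poly (frob_pow k) g \<noteq> 0"
    using assms(2) by (metis d degree_0 frob_pow_0 frob_pow_nz leading_coeff_0_iff lead_coeff_map_poly_nz)
  show "degree (skew_mult (monom c k) g) = k + degree g"
    using assms nz by (simp add: skew_mult_monom degree_mult_eq degree_monom_eq d)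
  show "coeff (skew_mult (monom c k) g) (k + degree g) = c * frob_pow k (lead_coeff g)"
    by (simp add: skew_mult_monom coeff_monom_mult coeff_map_poly)
qed

lemma degree_skew_mult_le:
  fixes a b :: "'a::{finite,field} poly"
  shows "degree (skew_mult a b) \<le> degree a + degree b"
  unfolding skew_mult_def
proof (rule degree_sum_le)
  fix i assume i: "i \<in> {..degree a}"
  have "degree (smult (coeff a i) (monom 1 i * map_poly (frob_pow i) b)) \<le> degree (monom (1::'a) i * map_poly (frob_pow i) b)"
    by (rule degree_smult_le)
  also have "\<dots> \<le> degree (monom (1::'a) i) + degree (map_poly (frob_pow i) b)"
    by (rule degree_mult_le)
  also have "\<dots> \<le> degree a + degree b"
    using i by (simp add: degree_map_poly frob_pow_nz degree_monom_eq)
  finally show "degree (smult (coeff a i) (monom 1 i * map_poly (frob_pow i) b)) \<le> degree a + degree b" .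
qed simp

lemma degree_skew_mult:
  fixes a b :: "'a::{finite,field} poly"
  assumes "a \<noteq> 0" "b \<noteq> 0"
  shows "degree (skew_mult a b) = degree a + degree b"
proof -
  define m where "m = monom (lead_coeff a) (degree a)"
  define a' where "a' = a - m"
  have a: "a = a' + m" by (simp add: a'_def)
  have dm: "degree (skew_mult m b) = degree a + degree b"
    using assms by (simp add: m_def degree_skew_monom)
  show ?thesis
  proof (cases "a' = 0")
    case True then show ?thesis using a dm by simp
  next
    case False
    have "degree a' < degree a"
    proof -
      have "degree a' \<le> degree a" unfolding a'_def m_def
        by (meson degree_diff_le degree_monom_le le_refl)
      moreover have "coeff a' (degree a) = 0" by (simp add: a'_def m_def)
      then have "degree a' \<noteq> degree a" using False by (metis leading_coeff_0_iff)
      ultimately show ?thesis by simp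
    qed
    then have "degree (skew_mult a' b) < degree a + degree b"
      using degree_skew_mult_le[of a' b] by simp
    then have "degree (skew_mult a' b + skew_mult m b) = degree (skew_mult m b)"
      using dm by (simp add: degree_add_eq_right)
    then show ?thesis using a dm by (simp add: skew_mult_add_left)
  qed
qed

lemma skew_unit_degree:
  fixes a :: "'a::{finite,field} poly"
  assumes "skew_unit a"
  shows "a \<noteq> 0 \<and> degree a = 0"
proof -
  obtain g where g: "skew_mult a g = 1" using assms skew_unit_def by blast
  then have "a \<noteq> 0" "g \<noteq> 0" by auto
  then have "degree (skew_mult a g) = degree a + degree g" by (rule degree_skew_mult)
  with g \<open>a \<noteq> 0\<close> show ?thesis by simp
qed

lemma skew_unit_const:
  fixes a :: "'a::{finite,field} poly"
  assumes "a \<noteq> 0" "degree a = 0"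
  shows "skew_unit a"
proof -
  have c: "coeff a 0 \<noteq> 0" using assms by (metis leading_coeff_0_iff)
  have a: "a = [:coeff a 0:]" using assms(2) by (metis degree_0_id)
  have "skew_mult a [:inverse (coeff a 0):] = 1" "skew_mult [:inverse (coeff a 0):] a = 1"
    using c assms(2) by (subst skew_mult_const; simp; subst a; simp)+
  then show ?thesis unfolding skew_unit_def by blast
qed

lemma fbr_shift:
  fixes g :: "'a::{finite,field} poly"
  shows "fbr (monom 1 i * map_poly (frob_pow i) g) = monom 1 (bracket TYPE('a) i) * fbr g ^ (CHAR('a)^i)"
proof -
  have "map_poly (frob_pow i) g = (\<Sum>j\<le>degree g. monom (frob_pow i (coeff g j)) j)"
    by (subst poly_as_sum_of_monoms[symmetric]) (simp add: degree_map_poly frob_pow_nz coeff_map_poly)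
  then have "monom 1 i * map_poly (frob_pow i) g = (\<Sum>j\<le>degree g. monom (frob_pow i (coeff g j)) (i + j))"
    by (simp add: sum_distrib_left mult_monom)
  then have "fbr (monom 1 i * map_poly (frob_pow i) g) = (\<Sum>j\<le>degree g. monom (frob_pow i (coeff g j)) (bracket TYPE('a) (i + j)))"
    by (simp add: fbr_sum fbr_monom)
  also have "\<dots> = monom 1 (bracket TYPE('a) i) * (\<Sum>j\<le>degree g. monom (coeff g j) (bracket TYPE('a) j) ^ (CHAR('a)^i))"
    by (simp add: sum_distrib_left monom_power mult_monom bracket_add frob_pow_def mult.commute)
  also have "(\<Sum>j\<le>degree g. monom (coeff g j) (bracket TYPE('a) j) ^ (CHAR('a)^i)) = fbr g ^ (CHAR('a)^i)"
    unfolding fbr_def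
    by (rule freshmans_dream_sum'[symmetric]) (simp_all add: prime_char)
  finally show ?thesis .
qed

lemma fbr_skew_mult_dvd:
  fixes q g :: "'a::{finite,field} poly"
  shows "fbr g dvd fbr (skew_mult q g)"
  unfolding skew_mult_def fbr_sum fbr_smult fbr_shift
proof (rule dvd_sum)
  fix i
  have "fbr g dvd fbr g ^ (CHAR('a)^i)"
    using char_ge2[where 'a='a] by (intro dvd_power) auto
  then show "fbr g dvd smult (coeff q i) (monom 1 (bracket TYPE('a) i) * fbr g ^ CHAR('a) ^ i)"
    by (simp add: dvd_smult)
qed

lemma skew_division:
  fixes g :: "'a::{finite,field} poly"
  assumes "degree g \<ge> 1"
  shows "\<exists>q r. f = skew_mult q g + r \<and> degree r < degree g"
proof (induction "degree f" arbitrary: f rule: less_induct)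
  case less
  show ?case
  proof (cases "degree f < degree g")
    case True then show ?thesis by (intro exI[of _ 0] exI[of _ f]) simp
  next
    case False
    have g0: "g \<noteq> 0" using assms by auto
    have f0: "f \<noteq> 0" using False assms by auto
    define k where "k = degree f - degree g"
    define c where "c = lead_coeff f / frob_pow k (lead_coeff g)"
    define m where "m = monom c k"
    have fz: "frob_pow k (lead_coeff g) \<noteq> 0" using g0 by (simp add: frob_pow_nz)
    have c0: "c \<noteq> 0" using f0 fz by (simp add: c_def)
    have kd: "k + degree g = degree f" using False by (simp add: k_def)
    have dm: "degree (skew_mult m g) = degree f"
      using degree_skew_monom(1)[OF c0 g0, of k] kd by (simp add: m_def)
    have lm: "coeff (skew_mult m g) (degree f) = lead_coeff f"
      using degree_skew_monom(2)[OF c0 g0, of k] kd fz by (simp add: m_def c_def)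
    define f' where "f' = f - skew_mult m g"
    have "degree f' < degree f"
    proof (cases "f' = 0")
      case True then show ?thesis using False assms by (simp add: not_less)
    next
      case nz: False
      have "degree f' \<le> degree f" unfolding f'_def
        by (rule degree_diff_le) (simp_all add: dm)
      moreover have "coeff f' (degree f) = 0" using lm by (simp add: f'_def)
      then have "degree f' \<noteq> degree f" using nz by (metis leading_coeff_0_iff)
      ultimately show ?thesis by simp
    qed
    then obtain q r where qr: "f' = skew_mult q g + r" "degree r < degree g"
      using less(1) by blast
    have "f = f' + skew_mult m g" by (simp add: f'_def)
    also have "\<dots> = (skew_mult q g + skew_mult m g) + r" using qr(1) by (simp only: ac_simps)
    also have "skew_mult q g + skew_mult m g = skew_mult (q + m) g" by (rule skew_mult_add_left[symmetric])
    finally have "f = skew_mult (q + m) g + r" .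
    then show ?thesis using qr(2) by blast
  qed
qed

theorem corollary2p6:
  fixes f :: "'a::{finite,field} poly"
  assumes "degree f \<ge> 1"
  shows "skew_irreducible f \<longleftrightarrow>
    \<not> (\<exists>u \<in> Fq_xbr. u dvd fbr f \<and> 0 < degree u \<and> degree u < degree (fbr f))"
proof
  assume irr: "skew_irreducible f"
  show "\<not> (\<exists>u \<in> Fq_xbr. u dvd fbr f \<and> 0 < degree u \<and> degree u < degree (fbr f))"
  proof
    assume "\<exists>u \<in> Fq_xbr. u dvd fbr f \<and> 0 < degree u \<and> degree u < degree (fbr f)"
    then obtain u where u: "u \<in> Fq_xbr" "u dvd fbr f" "0 < degree u" "degree u < degree (fbr f)"
      by blast
    obtain g where g: "fbr g = u" using fbr_surj[OF u(1)] by blast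
    have dg: "degree u = bracket TYPE('a) (degree g)" using g degree_fbr by metis
    have g1: "degree g \<ge> 1"
    proof (rule ccontr)
      assume "\<not> degree g \<ge> 1" then have "degree g = 0" by simp
      then show False using u(3) dg by simp
    qed
    have glt: "degree g < degree f"
      using u(4) dg by (simp add: degree_fbr br_less_iff)
    obtain q r where qr: "f = skew_mult q g + r" "degree r < degree g"
      using skew_division[OF g1] by blast
    have "fbr f = fbr (skew_mult q g) + fbr r" using qr(1) by (simp add: fbr_add)
    moreover have "u dvd fbr (skew_mult q g)" using fbr_skew_mult_dvd g by blast
    ultimately have "u dvd fbr r" using u(2) by (metis dvd_add_right_iff)
    moreover have "degree (fbr r) < degree u"
      using qr(2) dg by (simp add: degree_fbr br_less_iff)
    ultimately have "fbr r = 0" using dvd_imp_degree_le by fastforce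
    then have "r = 0" by (simp add: fbr_eq_0_iff)
    then have fq: "f = skew_mult q g" using qr by simp
    have q0: "q \<noteq> 0" using fq assms by (metis degree_0 not_one_le_zero skew_mult_0_left)
    have g0: "g \<noteq> 0" using g1 by auto
    have "degree f = degree q + degree g" using fq degree_skew_mult[OF q0 g0] by simp
    then have "degree q \<ge> 1" using glt by simp
    then have "\<not> skew_unit q" "\<not> skew_unit g" using g1 skew_unit_degree by fastforce+
    then show False using irr fq unfolding skew_irreducible_def by blast
  qed
next
  assume nou: "\<not> (\<exists>u \<in> Fq_xbr. u dvd fbr f \<and> 0 < degree u \<and> degree u < degree (fbr f))"
  have "\<not> skew_unit f" using assms skew_unit_degree by fastforce
  moreover have "skew_unit a \<or> skew_unit b" if fab: "f = skew_mult a b" for a b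
  proof (rule ccontr)
    assume nn: "\<not> (skew_unit a \<or> skew_unit b)"
    have a0: "a \<noteq> 0" and b0: "b \<noteq> 0" using fab assms by (metis degree_0 not_one_le_zero skew_mult_0_left skew_mult_0_right)+
    have "degree a \<ge> 1" using nn a0 skew_unit_const by (metis less_one not_le)
    moreover have "degree b \<ge> 1" using nn b0 skew_unit_const by (metis less_one not_le)
    moreover have df: "degree f = degree a + degree b" using fab degree_skew_mult[OF a0 b0] by simp
    ultimately have "0 < degree (fbr b)" "degree (fbr b) < degree (fbr f)"
      by (simp_all add: degree_fbr br_less_iff[where i=0, simplified] br_less_iff)
    moreover have "fbr b dvd fbr f" using fab fbr_skew_mult_dvd by blast
    ultimately show False using nou fbr_in by blast
  qed
  ultimately show "skew_irreducible f" unfolding skew_irreducible_def by blast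
qed

end
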